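(* Let $N\ge1$ and $1\le m\le N$ be integers, and let $D_{N,m}=|D_{N,m}\rangle\langle D_{N,m}|$ be the projector onto the Dicke state with $m$ excitations. Then $C_S(D_{N,m})\le m(2m+3)N+1$.
   Context: The Dicke state is $|D_{N,m}\rangle=\binom{N}{m}^{-1/2}\sum_\pi|0\rangle^{\otimes(N-m)}|1\rangle^{\otimes m}$, the normalized uniform superposition of all $N$-bit computational basis states of Hamming weight $m$. $\mathbb{I},\sigma_X,\sigma_Y,\sigma_Z$ are the identity and Pauli matrices. The notation $\sum_\pi \mathbb{I}^{\otimes j}\otimes A^{\otimes (N-j)}$ denotes the sum, over all distinct placements, of tensor products in which exactly $j$ of the $N$ factors are $\mathbb{I}$ and the other $N-j$ are $A$ (each distinct arrangement counted once). Measurement complexity: for an $N$-qubit permutation-invariant operator $\rho$, $C_S(\rho)$ is the minimal $n_A$ such that there exist real $b_i,c_i,d_i$ and real $\alpha_{ij}$ ($1\le i\le n_A$, $0\le j\le N$) with $\rho=\sum_{i=1}^{n_A}\sum_{j=0}^{N}\alpha_{ij}\sum_\pi\mathbb{I}^{\otimes j}\otimes A_i^{\otimes(N-j)}$, $A_i=b_i\sigma_X+c_i\sigma_Y+d_i\sigma_Z$. *)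

theory Defs
  imports Complex_Main
begin

text \<open>N-qubit operators are represented by their matrix entries in the computational
basis: basis states are bit lists of length N (False = |0>, True = |1>), and an
operator is a function (row bitstring, column bitstring) to complex.\<close>

type_synonym qop1 = "bool \<Rightarrow> bool \<Rightarrow> complex"
type_synonym qopN = "bool list \<Rightarrow> bool list \<Rightarrow> complex"

definition sigma_I :: qop1 where
  "sigma_I x y = (if x = y then 1 else 0)"

definition sigma_X :: qop1 where
  "sigma_X x y = (if x \<noteq> y then 1 else 0)"

definition sigma_Y :: qop1 where
  "sigma_Y x y = (if x = y then 0 else if \<not> x \<and> y then - \<i> else \<i>)"

definition sigma_Z :: qop1 where
  "sigma_Z x y = (if x \<noteq> y then 0 else if x then -1 else 1)"

definition pauli_comb :: "real \<Rightarrow> real \<Rightarrow> real \<Rightarrow> qop1" where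
  "pauli_comb b c d x y =
     complex_of_real b * sigma_X x y + complex_of_real c * sigma_Y x y
     + complex_of_real d * sigma_Z x y"

definition tensor :: "nat \<Rightarrow> (nat \<Rightarrow> qop1) \<Rightarrow> qopN" where
  "tensor N M x y = (\<Prod>k<N. M k (x ! k) (y ! k))"

definition perm_sum :: "nat \<Rightarrow> nat \<Rightarrow> qop1 \<Rightarrow> qopN" where
  "perm_sum N j A x y =
     (\<Sum>S\<in>{S. S \<subseteq> {..<N} \<and> card S = j}.
        tensor N (\<lambda>k. if k \<in> S then sigma_I else A) x y)"

definition hamming_weight :: "bool list \<Rightarrow> nat" where
  "hamming_weight x = length (filter id x)"

definition dicke_proj :: "nat \<Rightarrow> nat \<Rightarrow> qopN" where
  "dicke_proj N m x y =
     (if hamming_weight x = m \<and> hamming_weight y = m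
      then 1 / of_nat (N choose m) else 0)"

definition decomposable :: "nat \<Rightarrow> qopN \<Rightarrow> nat \<Rightarrow> bool" where
  "decomposable N \<rho> nA =
     (\<exists>(b::nat \<Rightarrow> real) (c::nat \<Rightarrow> real) (d::nat \<Rightarrow> real) (\<alpha>::nat \<Rightarrow> nat \<Rightarrow> real).
        \<forall>x y. length x = N \<longrightarrow> length y = N \<longrightarrow>
          \<rho> x y = (\<Sum>i<nA. \<Sum>j\<le>N. complex_of_real (\<alpha> i j) *
                      perm_sum N j (pauli_comb (b i) (c i) (d i)) x y))"

definition meas_complexity :: "nat \<Rightarrow> qopN \<Rightarrow> nat" where
  "meas_complexity N \<rho> = (LEAST nA. decomposable N \<rho> nA)"

end

theory Submission imports Defs "HOL-Computational_Algebra.Polynomial" begin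
lemma interp_exists:
  fixes U :: "real set" and r :: nat
  assumes fin: "finite U"
  shows "\<exists>c. \<forall>t < card U. (\<Sum>u\<in>U. c u * u ^ t) = (if t = r then 1 else 0)"
proof -
  define L where "L u = smult (1 / (\<Prod>v\<in>U-{u}. (u - v))) (\<Prod>v\<in>U-{u}. [:-v, 1:])" for u
  have polyL: "poly (L u) w = (if w = u then 1 else 0)" if "u \<in> U" "w \<in> U" for u w
  proof (cases "w = u")
    case True
    have "(\<Prod>v\<in>U-{u}. (u - v)) \<noteq> 0" using fin by (simp add: prod_zero_iff)
    then show ?thesis using True by (simp add: L_def poly_prod)
  next
    case False
    have "(\<Prod>v\<in>U-{u}. poly [:-v, 1:] w) = 0"
      using fin that False by (intro prod_zero) (auto intro!: bexI[of _ w])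
    then show ?thesis using False by (simp add: L_def poly_prod)
  qed
  have degL: "degree (L u) \<le> card U - 1" if "u \<in> U" for u
  proof -
    have "degree (\<Prod>v\<in>U-{u}. [:-v, 1:]) \<le> (\<Sum>v\<in>U-{u}. degree [:-v, (1::real):])"
      by (rule degree_prod_sum_le[unfolded o_def]) (use fin in auto)
    also have "\<dots> = card (U - {u})" by simp
    also have "\<dots> = card U - 1" using that fin by simp
    finally show ?thesis unfolding L_def by (simp add: degree_smult_le order_trans)
  qed
  have key: "(\<Sum>u\<in>U. smult (u ^ t) (L u)) = monom 1 t" if t: "t < card U" for t
  proof (rule ccontr)
    define q where "q = monom 1 t - (\<Sum>u\<in>U. smult (u ^ t) (L u))"
    assume "(\<Sum>u\<in>U. smult (u ^ t) (L u)) \<noteq> monom 1 t"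
    then have q0: "q \<noteq> 0" by (simp add: q_def)
    have "degree q \<le> card U - 1"
      unfolding q_def
    proof (rule degree_diff_le)
      show "degree (monom (1::real) t) \<le> card U - 1" using t by (simp add: degree_monom_eq)
      show "degree (\<Sum>u\<in>U. smult (u ^ t) (L u)) \<le> card U - 1"
        by (rule degree_sum_le[OF fin]) (rule order_trans[OF degree_smult_le degL], simp)
    qed
    moreover have "U \<subseteq> {x. poly q x = 0}"
    proof
      fix w assume w: "w \<in> U"
      have "poly (\<Sum>u\<in>U. smult (u ^ t) (L u)) w = (\<Sum>u\<in>U. u ^ t * (if w = u then 1 else 0))"
        by (simp add: poly_sum polyL w)
      also have "\<dots> = w ^ t" using fin w by (simp add: if_distrib sum.delta cong: if_cong)
      finally show "w \<in> {x. poly q x = 0}" by (simp add: q_def poly_monom)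
    qed
    then have "card U \<le> card {x. poly q x = 0}"
      by (intro card_mono poly_roots_finite q0)
    ultimately show False using card_poly_roots_bound[OF q0] t by linarith
  qed
  show ?thesis
  proof (intro exI allI impI)
    fix t assume t: "t < card U"
    have "(\<Sum>u\<in>U. coeff (L u) r * u ^ t) = coeff (\<Sum>u\<in>U. smult (u ^ t) (L u)) r"
      by (simp add: coeff_sum mult.commute)
    also have "\<dots> = (if t = r then 1 else 0)" using key[OF t] by (simp add: coeff_monom)
    finally show "(\<Sum>u\<in>U. coeff (L u) r * u ^ t) = (if t = r then 1 else 0)" .
  qed
qed
lemma prod_hw: "(\<Prod>k<length x. (if x!k then z else 1)) = (z::complex) ^ hamming_weight x"
proof (induction x)
  case Nil then show ?case by (simp add: hamming_weight_def)
next
  case (Cons a x)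
  then show ?case by (simp del: prod.lessThan_Suc add: prod.lessThan_Suc_shift hamming_weight_def)
qed

lemma tensor_B:
  assumes "length x = N" "length y = N"
  shows "tensor N (\<lambda>k a b. (if a then z else 1) * (if b then w else 1)) x y
         = z ^ hamming_weight x * w ^ hamming_weight y"
  unfolding tensor_def prod.distrib using assms prod_hw[of x z] prod_hw[of y w] by simp

lemma hw_le: "hamming_weight x \<le> length x"
  by (simp add: hamming_weight_def)

lemma B_decomp:
  "(if a then z else 1) * (if b then cnj z else 1) =
    complex_of_real ((1 + (Re z ^ 2 + Im z ^ 2)) / 2) * sigma_I a b
    + pauli_comb (Re z) (Im z) ((1 - (Re z ^ 2 + Im z ^ 2)) / 2) a b"
  by (cases a; cases b; simp add: sigma_I_def sigma_X_def sigma_Y_def sigma_Z_def pauli_comb_def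
        complex_eq_iff power2_eq_square field_simps)

lemma pauli_scale:
  "pauli_comb (l * p) (l * q) (l * r) a b = complex_of_real l * pauli_comb p q r a b"
  by (simp add: pauli_comb_def algebra_simps)

lemma tensor_expand:
  "tensor N (\<lambda>k a b. complex_of_real s * sigma_I a b + complex_of_real t * A a b) x y
   = (\<Sum>j\<le>N. complex_of_real (s ^ j * t ^ (N - j)) * perm_sum N j A x y)"
proof -
  let ?P = "{..<N}"
  have "tensor N (\<lambda>k a b. complex_of_real s * sigma_I a b + complex_of_real t * A a b) x y
      = (\<Sum>X\<in>Pow ?P. (\<Prod>k\<in>X. complex_of_real s * sigma_I (x!k) (y!k)) *
                        (\<Prod>k\<in>?P - X. complex_of_real t * A (x!k) (y!k)))"
    unfolding tensor_def by (rule prod_add) simp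
  also have "\<dots> = (\<Sum>X\<in>Pow ?P. complex_of_real (s ^ card X * t ^ (N - card X)) *
        tensor N (\<lambda>k. if k \<in> X then sigma_I else A) x y)"
  proof (rule sum.cong[OF refl])
    fix X assume X: "X \<in> Pow ?P"
    then have fX: "finite X" by (auto intro: finite_subset)
    have cd: "card (?P - X) = N - card X" using X by (simp add: card_Diff_subset fX)
    have "tensor N (\<lambda>k. if k \<in> X then sigma_I else A) x y
        = (\<Prod>k\<in>X. sigma_I (x!k) (y!k)) * (\<Prod>k\<in>?P - X. A (x!k) (y!k))"
    proof -
      have "(\<Prod>k<N. (if k \<in> X then sigma_I else A) (x ! k) (y ! k)) =
            (\<Prod>k<N. if k \<in> X then sigma_I (x ! k) (y ! k) else A (x ! k) (y ! k))"
        by (intro prod.cong) auto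
      also have "\<dots> = (\<Prod>k\<in>X. sigma_I (x!k) (y!k)) * (\<Prod>k\<in>?P - X. A (x!k) (y!k))"
        using X by (simp add: prod.If_cases Int_absorb1 Diff_eq)
      finally show ?thesis unfolding tensor_def .
    qed
    then show "(\<Prod>k\<in>X. complex_of_real s * sigma_I (x!k) (y!k)) *
        (\<Prod>k\<in>?P - X. complex_of_real t * A (x!k) (y!k)) =
        complex_of_real (s ^ card X * t ^ (N - card X)) *
        tensor N (\<lambda>k. if k \<in> X then sigma_I else A) x y"
      by (simp add: prod.distrib cd)
  qed
  also have "\<dots> = (\<Sum>j\<le>N. \<Sum>X\<in>{S. S \<subseteq> ?P \<and> card S = j}. complex_of_real (s ^ card X * t ^ (N - card X)) *
        tensor N (\<lambda>k. if k \<in> X then sigma_I else A) x y)"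
  proof -
    have eq: "Pow ?P = (\<Union>j\<in>{..N}. {S. S \<subseteq> ?P \<and> card S = j})"
      by (auto dest: card_mono[of ?P, simplified])
    show ?thesis unfolding eq
      by (rule sum.UNION_disjoint) (auto intro: finite_subset)
  qed
  also have "\<dots> = (\<Sum>j\<le>N. complex_of_real (s ^ j * t ^ (N - j)) * perm_sum N j A x y)"
    unfolding perm_sum_def sum_distrib_left by (intro sum.cong refl) auto
  finally show ?thesis .
qed

lemma sum_div_mod:
  fixes n K :: nat and f :: "nat \<Rightarrow> nat \<Rightarrow> 'a::comm_monoid_add"
  assumes "0 < K"
  shows "(\<Sum>i<n*K. f (i div K) (i mod K)) = (\<Sum>a<n. \<Sum>k<K. f a k)"
proof (induction n)
  case 0 then show ?case by simp
next
  case (Suc n)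
  have e: "{..<Suc n * K} = {..<n*K} \<union> {n*K..<n*K+K}" by auto
  have "(\<Sum>i<Suc n*K. f (i div K) (i mod K)) = (\<Sum>i<n*K. f (i div K) (i mod K)) + (\<Sum>i\<in>{n*K..<n*K+K}. f (i div K) (i mod K))"
    unfolding e by (rule sum.union_disjoint) auto
  also have "(\<Sum>i\<in>{n*K..<n*K+K}. f (i div K) (i mod K)) = (\<Sum>k<K. f n k)"
  proof -
    have "(\<Sum>i\<in>{n*K..<n*K+K}. f (i div K) (i mod K)) = (\<Sum>k\<in>{0..<K}. f ((k + n*K) div K) ((k + n*K) mod K))"
      by (subst sum.shift_bounds_nat_ivl[symmetric]) (simp add: add.commute)
    also have "\<dots> = (\<Sum>k<K. f n k)" using assms by (intro sum.cong) auto
    finally show ?thesis .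
  qed
  finally show ?case using Suc by simp
qed

lemma cis_root_ne1:
  assumes "0 < e" "e < n"
  shows "cis (2 * pi / real n) ^ e \<noteq> 1"
proof
  assume h: "cis (2 * pi / real n) ^ e = 1"
  then have "cis (real e * (2 * pi / real n)) = 1" by (simp add: DeMoivre)
  then have "cos (real e * (2 * pi / real n)) = 1" by (metis complex.sel(1) cis.code one_complex.sel(1))
  then obtain k :: int where k: "real e * (2 * pi / real n) = of_int k * 2 * pi"
    by (auto simp: cos_one_2pi_int)
  have n0: "real n > 0" using assms by simp
  from k have "real e = of_int k * real n" using n0 by (simp add: field_simps)
  then have "int e = k * int n" by (metis of_int_eq_iff of_int_mult of_int_of_nat_eq)
  moreover have "0 < int e" "int e < int n" using assms by auto
  ultimately show False
    by (smt (verit, best) mult_le_cancel_right1 mult_pos_pos zero_less_mult_pos2)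
qed

lemma root_sum:
  fixes hx hy n :: nat
  assumes "hx < n" "hy < n"
  defines "w \<equiv> cis (2 * pi / real n)"
  shows "(\<Sum>a<n. (w ^ hx * cnj w ^ hy) ^ a) = (if hx = hy then of_nat n else 0)"
proof -
  have cw: "cnj w = inverse w" unfolding w_def by (simp add: cis_cnj cis_inverse)
  have w0: "w \<noteq> 0" unfolding w_def by simp
  have wn: "w ^ n = 1" unfolding w_def using assms by (simp add: DeMoivre)
  show ?thesis
  proof (cases "hx = hy")
    case True
    then show ?thesis using w0 by (simp add: cw power_inverse)
  next
    case False
    define g where "g = w ^ hx * cnj w ^ hy"
    have gn: "g ^ n = 1" unfolding g_def cw
    proof -
      have a: "(w ^ k) ^ n = 1" for k by (metis power_mult mult.commute wn power_one)
      show "(w ^ hx * inverse w ^ hy) ^ n = 1"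
        by (simp add: power_mult_distrib power_inverse a flip: power_mult) (simp add: a power_mult)
    qed
    have "g \<noteq> 1"
    proof
      assume "g = 1"
      then have eq: "w ^ hx = w ^ hy" unfolding g_def cw using w0
        by (simp add: power_inverse field_simps)
      show False
      proof (cases "hx < hy")
        case True
        have "w ^ hy = w ^ hx * w ^ (hy - hx)" using True by (simp flip: power_add)
        then have "w ^ (hy - hx) = 1" using eq w0 by simp
        then show False using cis_root_ne1[of "hy - hx" n] True assms unfolding w_def by simp
      next
        case f: False
        then have True': "hy < hx" using False by simp
        have "w ^ hx = w ^ hy * w ^ (hx - hy)" using True' by (simp flip: power_add)
        then have "w ^ (hx - hy) = 1" using eq w0 by simp
        then show False using cis_root_ne1[of "hx - hy" n] True' assms unfolding w_def by simp
      qed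
    qed
    then have "(\<Sum>a<n. g ^ a) = 0" by (simp add: geometric_sum gn)
    then show ?thesis using False by (simp add: g_def)
  qed
qed

lemma z_pow:
  "(complex_of_real v * w ^ a) ^ hx * cnj (complex_of_real v * w ^ a) ^ hy
   = complex_of_real (v ^ (hx + hy)) * (w ^ hx * cnj w ^ hy) ^ a"
  by (simp add: power_mult_distrib power_add complex_cnj_power mult.commute mult.left_commute
      flip: power_mult)

lemma bound_arith:
  fixes N m :: nat
  assumes "1 \<le> N" "1 \<le> m"
  shows "(2*m+1) * (N+1) \<le> m * (2 * m + 3) * N + 1"
proof -
  obtain a where a: "N = a + 1" using assms by (metis add.commute le_add_diff_inverse)
  obtain b where b: "m = b + 1" using assms by (metis add.commute le_add_diff_inverse)
  show ?thesis unfolding a b by (simp add: algebra_simps)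
qed

theorem theorem3:
  fixes N m :: nat
  assumes "1 \<le> N" and "1 \<le> m" and "m \<le> N"
  shows "(\<exists>nA. decomposable N (dicke_proj N m) nA) \<and>
         meas_complexity N (dicke_proj N m) \<le> m * (2 * m + 3) * N + 1"
proof -
  define n where "n = 2 * m + 1"
  define K where "K = Suc N"
  define nA where "nA = n * K"
  define U where "U = (\<lambda>k. real k + 1) ` {..<K} \<union> (\<lambda>k. - 1 / (real k + 1)) ` {..<K}"
  have inj1: "inj_on (\<lambda>k. real k + 1) {..<K}" by (auto simp: inj_on_def)
  have inj2: "inj_on (\<lambda>k. - 1 / (real k + 1)) {..<K}"
    by (auto simp: inj_on_def field_simps)
  have disj: "(\<lambda>k. real k + 1) ` {..<K} \<inter> (\<lambda>k. - 1 / (real k + 1)) ` {..<K} = {}"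
  proof -
    have "- 1 / (real k + 1) < 0" for k :: nat by (simp add: divide_neg_pos)
    moreover have "real k + 1 > 0" for k :: nat by simp
    ultimately have "real k + 1 \<noteq> - 1 / (real k' + 1)" for k k' :: nat
      by (metis less_asym)
    then show ?thesis by auto
  qed
  have sumU: "(\<Sum>u\<in>U. f u) = (\<Sum>k<K. f (real k + 1)) + (\<Sum>k<K. f (- 1 / (real k + 1)))" for f :: "real \<Rightarrow> real"
    unfolding U_def
    by (subst sum.union_disjoint) (use disj inj1 inj2 in \<open>auto simp: sum.reindex\<close>)
  have cardU: "card U = 2 * K"
    unfolding U_def using disj inj1 inj2 by (simp add: card_Un_disjoint card_image)
  obtain cc where cc: "\<forall>t < card U. (\<Sum>u\<in>U. cc u * u ^ t) = (if t = 2 * m then 1 else 0)"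
    using interp_exists[of U "2 * m"] unfolding U_def by auto
  define w where "w = cis (2 * pi / real n)"
  define ua where "ua i = real (i mod K) + 1" for i
  define z where "z i = complex_of_real (ua i) * w ^ (i div K)" for i
  define z' where "z' i = complex_of_real (- 1 / ua i) * w ^ (i div K)" for i
  define lam where "lam i = - 1 / (ua i) ^ 2" for i
  define sv where "sv i = (1 + (ua i) ^ 2) / 2" for i
  define sv' where "sv' i = (1 + 1 / (ua i) ^ 2) / 2" for i
  define b where "b i = Re (z i)" for i
  define c where "c i = Im (z i)" for i
  define d where "d i = (1 - (ua i) ^ 2) / 2" for i
  define C0 where "C0 = 1 / (real (N choose m) * real n)"
  define \<alpha> where "\<alpha> i j = C0 * (cc (ua i) * sv i ^ j + cc (- 1 / ua i) * sv' i ^ j * lam i ^ (N - j))" for i j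
  have ua0: "ua i > 0" for i unfolding ua_def by simp
  have nw: "cmod w = 1" unfolding w_def by simp
  have nz: "Re (z i) ^ 2 + Im (z i) ^ 2 = (ua i) ^ 2" for i
  proof -
    have "cmod (z i) = ua i" unfolding z_def using ua0[of i] by (simp add: norm_mult norm_power nw)
    then show ?thesis by (metis cmod_power2)
  qed
  have z'z: "z' i = complex_of_real (lam i) * z i" for i
    unfolding z'_def z_def lam_def using ua0[of i] by (simp add: field_simps power2_eq_square)
  have Bz: "(\<lambda>k a bb. (if a then z i else 1) * (if bb then cnj (z i) else 1)) =
            (\<lambda>k a bb. complex_of_real (sv i) * sigma_I a bb + complex_of_real 1 * pauli_comb (b i) (c i) (d i) a bb)" for i
    by (intro ext, subst B_decomp) (simp add: nz sv_def b_def c_def d_def)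
  have Bz': "(\<lambda>k a bb. (if a then z' i else 1) * (if bb then cnj (z' i) else 1)) =
            (\<lambda>k a bb. complex_of_real (sv' i) * sigma_I a bb + complex_of_real (lam i) * pauli_comb (b i) (c i) (d i) a bb)" for i
  proof (intro ext, subst B_decomp)
    fix k a bb
    have r: "Re (z' i) ^ 2 + Im (z' i) ^ 2 = 1 / (ua i) ^ 2"
      unfolding z'z using nz[of i] ua0[of i]
      by (simp add: lam_def power_mult_distrib field_simps power2_eq_square)
    have p: "pauli_comb (Re (z' i)) (Im (z' i)) ((1 - (Re (z' i) ^ 2 + Im (z' i) ^ 2)) / 2) a bb
        = complex_of_real (lam i) * pauli_comb (b i) (c i) (d i) a bb"
    proof -
      have "(1 - (Re (z' i) ^ 2 + Im (z' i) ^ 2)) / 2 = lam i * d i"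
        unfolding r lam_def d_def using ua0[of i] by (simp add: field_simps power2_eq_square)
      moreover have "Re (z' i) = lam i * b i" "Im (z' i) = lam i * c i"
        unfolding z'z b_def c_def by simp_all
      ultimately show ?thesis by (simp add: pauli_scale)
    qed
    show "complex_of_real ((1 + (Re (z' i) ^ 2 + Im (z' i) ^ 2)) / 2) * sigma_I a bb +
          pauli_comb (Re (z' i)) (Im (z' i)) ((1 - (Re (z' i) ^ 2 + Im (z' i) ^ 2)) / 2) a bb =
          complex_of_real (sv' i) * sigma_I a bb + complex_of_real (lam i) * pauli_comb (b i) (c i) (d i) a bb"
      using p r by (simp add: sv'_def)
  qed
  have inner: "(\<Sum>j\<le>N. complex_of_real (\<alpha> i j) * perm_sum N j (pauli_comb (b i) (c i) (d i)) x y)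
     = complex_of_real C0 * (complex_of_real (cc (ua i)) * (z i ^ hamming_weight x * cnj (z i) ^ hamming_weight y)
        + complex_of_real (cc (- 1 / ua i)) * (z' i ^ hamming_weight x * cnj (z' i) ^ hamming_weight y))"
    if "length x = N" "length y = N" for i x y
  proof -
    let ?P = "\<lambda>j. perm_sum N j (pauli_comb (b i) (c i) (d i)) x y"
    have e1: "z i ^ hamming_weight x * cnj (z i) ^ hamming_weight y = (\<Sum>j\<le>N. complex_of_real (sv i ^ j * 1 ^ (N - j)) * ?P j)"
      using tensor_B[OF that, of "z i" "cnj (z i)"] tensor_expand[of N "sv i" 1 "pauli_comb (b i) (c i) (d i)" x y]
      by (simp only: Bz)
    have e2: "z' i ^ hamming_weight x * cnj (z' i) ^ hamming_weight y = (\<Sum>j\<le>N. complex_of_real (sv' i ^ j * lam i ^ (N - j)) * ?P j)"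
      using tensor_B[OF that, of "z' i" "cnj (z' i)"] tensor_expand[of N "sv' i" "lam i" "pauli_comb (b i) (c i) (d i)" x y]
      by (simp only: Bz')
    show ?thesis unfolding e1 e2 \<alpha>_def
      by (simp add: sum_distrib_left sum.distrib algebra_simps)
  qed
  have main: "dicke_proj N m x y = (\<Sum>i<nA. \<Sum>j\<le>N. complex_of_real (\<alpha> i j) * perm_sum N j (pauli_comb (b i) (c i) (d i)) x y)"
    if lx: "length x = N" and ly: "length y = N" for x y
  proof -
    define hx where "hx = hamming_weight x"
    define hy where "hy = hamming_weight y"
    have hxN: "hx \<le> N" "hy \<le> N" unfolding hx_def hy_def using hw_le lx ly by metis+
    define g where "g = w ^ hx * cnj w ^ hy"
    define Q where "Q = (\<Sum>u\<in>U. cc u * u ^ (hx + hy))"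
    have "(\<Sum>i<nA. \<Sum>j\<le>N. complex_of_real (\<alpha> i j) * perm_sum N j (pauli_comb (b i) (c i) (d i)) x y)
        = (\<Sum>i<n * K. complex_of_real C0 * g ^ (i div K) * complex_of_real (cc (real (i mod K) + 1) * (real (i mod K) + 1) ^ (hx + hy)
             + cc (- 1 / (real (i mod K) + 1)) * (- 1 / (real (i mod K) + 1)) ^ (hx + hy)))"
      unfolding nA_def
    proof (intro sum.cong refl)
      fix i
      show "(\<Sum>j\<le>N. complex_of_real (\<alpha> i j) * perm_sum N j (pauli_comb (b i) (c i) (d i)) x y) =
        complex_of_real C0 * g ^ (i div K) * complex_of_real (cc (real (i mod K) + 1) * (real (i mod K) + 1) ^ (hx + hy)
             + cc (- 1 / (real (i mod K) + 1)) * (- 1 / (real (i mod K) + 1)) ^ (hx + hy))"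
        unfolding inner[OF lx ly] z_def z'_def z_pow g_def hx_def hy_def
        by (simp add: ua_def algebra_simps)
    qed
    also have "\<dots> = (\<Sum>a<n. \<Sum>k<K. complex_of_real C0 * g ^ a * complex_of_real (cc (real k + 1) * (real k + 1) ^ (hx + hy)
             + cc (- 1 / (real k + 1)) * (- 1 / (real k + 1)) ^ (hx + hy)))"
      by (rule sum_div_mod) (simp add: K_def)
    also have "\<dots> = (\<Sum>a<n. complex_of_real C0 * g ^ a * complex_of_real Q)"
    proof (rule sum.cong[OF refl])
      fix a
      have qq: "(\<Sum>k<K. cc (real k + 1) * (real k + 1) ^ (hx + hy)
             + cc (- 1 / (real k + 1)) * (- 1 / (real k + 1)) ^ (hx + hy)) = Q"
        unfolding Q_def sumU by (simp only: sum.distrib)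
      show "(\<Sum>k<K. complex_of_real C0 * g ^ a * complex_of_real (cc (real k + 1) * (real k + 1) ^ (hx + hy)
             + cc (- 1 / (real k + 1)) * (- 1 / (real k + 1)) ^ (hx + hy))) = complex_of_real C0 * g ^ a * complex_of_real Q"
        unfolding qq[symmetric] by (simp only: of_real_sum sum_distrib_left)
    qed
    also have "\<dots> = complex_of_real C0 * (\<Sum>a<n. g ^ a) * complex_of_real Q"
      by (simp only: sum_distrib_left sum_distrib_right)
    also have "\<dots> = dicke_proj N m x y"
    proof -
      have Qv: "Q = (if hx + hy = 2 * m then 1 else 0)"
        unfolding Q_def using cc hxN cardU by (simp add: K_def)
      have Cpos: "real (N choose m) > 0" using assms by simp
      show ?thesis
      proof (cases "hx + hy = 2 * m")
        case False
        then show ?thesis unfolding Qv dicke_proj_def hx_def hy_def by auto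
      next
        case True
        have lt: "hx < n" "hy < n" using True unfolding n_def by auto
        have rs: "(\<Sum>a<n. g ^ a) = (if hx = hy then of_nat n else 0)"
          unfolding g_def w_def by (rule root_sum[OF lt])
        show ?thesis
        proof (cases "hx = hy")
          case True': True
          then have "hx = m" "hy = m" using True by auto
          moreover have cz: "complex_of_nat (N choose m) + complex_of_nat m * (2 * complex_of_nat (N choose m)) \<noteq> 0"
          proof -
            have "(N choose m) + m * (2 * (N choose m)) \<noteq> 0" using Cpos by simp
            then have "complex_of_nat ((N choose m) + m * (2 * (N choose m))) \<noteq> 0"
              by (metis of_nat_eq_0_iff)
            then show ?thesis by simp
          qed
          ultimately show ?thesis unfolding Qv rs dicke_proj_def hx_def hy_def C0_def using True True' Cpos
            by (simp add: n_def field_simps)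
        next
          case False
          then have "\<not> (hx = m \<and> hy = m)" by auto
          then show ?thesis unfolding Qv rs dicke_proj_def using False True
            by (auto simp: hx_def hy_def)
        qed
      qed
    qed
    finally show ?thesis by simp
  qed
  have dec: "decomposable N (dicke_proj N m) nA"
    unfolding decomposable_def
    by (intro exI[of _ b] exI[of _ c] exI[of _ d] exI[of _ \<alpha>] allI impI main)
  have "meas_complexity N (dicke_proj N m) \<le> nA"
    unfolding meas_complexity_def by (rule Least_le) (rule dec)
  also have "nA \<le> m * (2 * m + 3) * N + 1"
    unfolding nA_def n_def K_def using bound_arith[OF assms(1,2)] by simp
  finally show ?thesis using dec by blast
qed

end
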